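(* Let $L:\mathbb{R}^d\times\mathbb{R}^{d+1}\to\mathbb{R}$ be such that $L(w,z)$ is convex in $w$, let $\nabla_1L(w,z)$ be a sub-gradient of $L(\cdot,z)$ at $w$, and assume there are constants $A,B\ge0$ with $\|\nabla_1 L(w,z)\|^2\le A L(w,z)+B$ for all $w\in\mathbb{R}^d$, $z\in\mathbb{R}^{d+1}$. Let $\eta>0$, $g\ge0$, $\theta\in[0,\infty]$, $w\in\mathbb{R}^d$, $z\in\mathbb{R}^{d+1}$, and let \[ w'=T_1\big(w-\eta\nabla_1L(w,z),\ g\eta,\ \theta\big). \] Then for all $\bar w\in\mathbb{R}^d$, \[ (1-0.5A\eta)L(w,z)+g\|w'\cdot I(|w'|\le\theta)\|_1\le L(\bar w,z)+g\|\bar w\cdot I(|w'|\le\theta)\|_1+\frac{\eta}{2}B+\frac{\|\bar w-w\|^2-\|\bar w-w'\|^2}{2\eta}. \]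
   Context: $\|\cdot\|$ is the Euclidean norm and $\|\cdot\|_1$ the $1$-norm. $T_1(v,\alpha,\theta)$ is applied coordinatewise: $T_1(v_j,\alpha,\theta)=\max(0,v_j-\alpha)$ if $v_j\in[0,\theta]$, $=\min(0,v_j+\alpha)$ if $v_j\in[-\theta,0]$, and $=v_j$ otherwise. For $v,v'\in\mathbb{R}^d$, $\|v\cdot I(|v'|\le\theta)\|_1=\sum_{j=1}^d|v_j|\,I(|v'_j|\le\theta)$ with $I$ the indicator function. *)

theory Defs
  imports "HOL-Analysis.Analysis"
begin

definition T1 :: "real \<Rightarrow> real \<Rightarrow> ereal \<Rightarrow> real" where
  "T1 v \<alpha> \<theta> =
     (if 0 \<le> v \<and> ereal v \<le> \<theta> then max 0 (v - \<alpha>)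
      else if v \<le> 0 \<and> ereal (- v) \<le> \<theta> then min 0 (v + \<alpha>)
      else v)"

definition T1_vec :: "real^'d \<Rightarrow> real \<Rightarrow> ereal \<Rightarrow> real^'d" where
  "T1_vec v \<alpha> \<theta> = (\<chi> j. T1 (v $ j) \<alpha> \<theta>)"

definition masked_l1 :: "real^'d \<Rightarrow> real^'d \<Rightarrow> ereal \<Rightarrow> real" where
  "masked_l1 v v' \<theta> = (\<Sum>j\<in>UNIV. \<bar>v $ j\<bar> * of_bool (ereal \<bar>v' $ j\<bar> \<le> \<theta>))"

end

theory Submission
  imports Defs
begin

lemma T1_coord:
  fixes u b \<alpha> :: real and \<theta> :: ereal
  assumes a: "\<alpha> \<ge> 0" and th: "\<theta> \<ge> 0"
  shows "(u - T1 u \<alpha> \<theta>) * (b - T1 u \<alpha> \<theta>)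
         \<le> \<alpha> * ((\<bar>b\<bar> - \<bar>T1 u \<alpha> \<theta>\<bar>) * of_bool (ereal \<bar>T1 u \<alpha> \<theta>\<bar> \<le> \<theta>))"
proof (cases "0 \<le> u \<and> ereal u \<le> \<theta>")
  case True
  hence T: "T1 u \<alpha> \<theta> = max 0 (u - \<alpha>)" by (simp add: T1_def)
  have "ereal \<bar>max 0 (u - \<alpha>)\<bar> \<le> ereal u" using True a by auto
  hence I: "ereal \<bar>max 0 (u - \<alpha>)\<bar> \<le> \<theta>" using True order_trans by blast
  show ?thesis
  proof (cases "u > \<alpha>")
    case True
    hence T': "T1 u \<alpha> \<theta> = u - \<alpha>" using T by simp
    have I': "ereal \<bar>u - \<alpha>\<bar> \<le> \<theta>" using I T T' by simp
    have "(u - (u - \<alpha>)) * (b - (u - \<alpha>)) \<le> \<alpha> * (\<bar>b\<bar> - \<bar>u - \<alpha>\<bar>)"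
      using True a by (simp add: mult_left_mono)
    then show ?thesis using T' I' by simp
  next
    case False
    then have "max 0 (u - \<alpha>) = 0" by auto
    moreover have "u * b \<le> \<alpha> * \<bar>b\<bar>" using False \<open>0 \<le> u \<and> ereal u \<le> \<theta>\<close>
      by (metis abs_ge_self abs_mult abs_of_nonneg mult_right_mono not_less order_trans abs_ge_zero)
    ultimately show ?thesis using T I by simp
  qed
next
  case F1: False
  show ?thesis
  proof (cases "u \<le> 0 \<and> ereal (- u) \<le> \<theta>")
    case True
    hence T: "T1 u \<alpha> \<theta> = min 0 (u + \<alpha>)" using F1 True unfolding T1_def by (auto split: if_splits)
    have "ereal \<bar>min 0 (u + \<alpha>)\<bar> \<le> ereal (-u)" using True a by auto
    hence I: "ereal \<bar>min 0 (u + \<alpha>)\<bar> \<le> \<theta>" using True order_trans by blast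
    show ?thesis
    proof (cases "-u > \<alpha>")
      case True
      hence T': "T1 u \<alpha> \<theta> = u + \<alpha>" using T by simp
      have I': "ereal \<bar>u + \<alpha>\<bar> \<le> \<theta>" using I T T' by simp
      have "(u - (u + \<alpha>)) * (b - (u + \<alpha>)) \<le> \<alpha> * (\<bar>b\<bar> - \<bar>u + \<alpha>\<bar>)"
      proof -
        have "0 \<le> \<alpha> * (b + \<bar>b\<bar>)" using a by simp
        thus ?thesis using True a by (simp add: algebra_simps)
      qed
      then show ?thesis using T' I' by simp
    next
      case False
      then have "min 0 (u + \<alpha>) = 0" by auto
      moreover have "u * b \<le> \<alpha> * \<bar>b\<bar>" using False \<open>u \<le> 0 \<and> ereal (- u) \<le> \<theta>\<close>
      proof -
        have "u * b \<le> \<bar>u\<bar> * \<bar>b\<bar>" by (metis abs_ge_self abs_mult)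
        also have "\<dots> \<le> \<alpha> * \<bar>b\<bar>" using False True by (intro mult_right_mono) auto
        finally show ?thesis .
      qed
      ultimately show ?thesis using T I by simp
    qed
  next
    case False
    hence T: "T1 u \<alpha> \<theta> = u" using F1 unfolding T1_def by (auto split: if_splits)
    have "\<not> ereal \<bar>u\<bar> \<le> \<theta>" using F1 False by (cases "u \<ge> 0") auto
    then show ?thesis using T by simp
  qed
qed

lemma norm_add_sq: fixes x y :: "'a::real_inner"
  shows "(norm (x + y))\<^sup>2 = (norm x)\<^sup>2 + 2 * (x \<bullet> y) + (norm y)\<^sup>2"
  by (simp add: power2_norm_eq_inner inner_add_left inner_add_right inner_commute)

theorem lemma1:
  fixes L :: "real^'d \<Rightarrow> real^'e \<Rightarrow> real"
    and G :: "real^'d \<Rightarrow> real^'e \<Rightarrow> real^'d"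
    and A B \<eta> g :: real and \<theta> :: ereal
    and w wbar :: "real^'d" and z :: "real^'e"
  assumes dim_z: "CARD('e) = CARD('d) + 1"
    and conv: "\<And>z. convex_on UNIV (\<lambda>w. L w z)"
    and subgrad: "\<And>w z v. L v z \<ge> L w z + G w z \<bullet> (v - w)"
    and AB: "A \<ge> 0" "B \<ge> 0"
    and growth: "\<And>w z. (norm (G w z))\<^sup>2 \<le> A * L w z + B"
    and eta: "\<eta> > 0" and g: "g \<ge> 0" and theta: "\<theta> \<ge> 0"
  shows "(let w' = T1_vec (w - \<eta> *\<^sub>R G w z) (g * \<eta>) \<theta> in
           (1 - 0.5 * A * \<eta>) * L w z + g * masked_l1 w' w' \<theta>
           \<le> L wbar z + g * masked_l1 wbar w' \<theta> + \<eta> / 2 * B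
              + ((norm (wbar - w))\<^sup>2 - (norm (wbar - w'))\<^sup>2) / (2 * \<eta>))"
proof -
  define u where "u = w - \<eta> *\<^sub>R G w z"
  define c where "c = T1_vec u (g * \<eta>) \<theta>"
  define Gw where "Gw = G w z"
  define Mb where "Mb = masked_l1 wbar c \<theta>"
  define Mc where "Mc = masked_l1 c c \<theta>"
  have al: "g * \<eta> \<ge> 0" using g eta by simp
  have F1: "(u - c) \<bullet> (wbar - c) \<le> g * \<eta> * (Mb - Mc)"
  proof -
    have "(u - c) \<bullet> (wbar - c) = (\<Sum>j\<in>UNIV. (u$j - T1 (u$j) (g*\<eta>) \<theta>) * (wbar$j - T1 (u$j) (g*\<eta>) \<theta>))"
      by (simp add: inner_vec_def c_def T1_vec_def)
    also have "\<dots> \<le> (\<Sum>j\<in>UNIV. g*\<eta> * ((\<bar>wbar$j\<bar> - \<bar>T1 (u$j) (g*\<eta>) \<theta>\<bar>) * of_bool (ereal \<bar>T1 (u$j) (g*\<eta>) \<theta>\<bar> \<le> \<theta>)))"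
      by (intro sum_mono T1_coord al theta)
    also have "\<dots> = g * \<eta> * (Mb - Mc)"
      unfolding Mb_def Mc_def masked_l1_def c_def T1_vec_def vec_lambda_beta
        sum_subtractf[symmetric] right_diff_distrib left_diff_distrib
      by (simp only: sum_distrib_left sum_subtractf right_diff_distrib)
    finally show ?thesis .
  qed
  have N1: "(norm (wbar - u))\<^sup>2 = (norm (wbar - c))\<^sup>2 + 2 * ((wbar - c) \<bullet> (c - u)) + (norm (c - u))\<^sup>2"
  proof -
    have "wbar - u = (wbar - c) + (c - u)" by simp
    hence "(norm (wbar - u))\<^sup>2 = (norm ((wbar - c) + (c - u)))\<^sup>2" by metis
    also have "\<dots> = (norm (wbar - c))\<^sup>2 + 2 * ((wbar - c) \<bullet> (c - u)) + (norm (c - u))\<^sup>2"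
      by (rule norm_add_sq)
    finally show ?thesis .
  qed
  have N2: "(norm (wbar - u))\<^sup>2 = (norm (wbar - w))\<^sup>2 + 2 * \<eta> * (Gw \<bullet> (wbar - w)) + \<eta>\<^sup>2 * (norm Gw)\<^sup>2"
  proof -
    have "wbar - u = (wbar - w) + \<eta> *\<^sub>R Gw" by (simp add: u_def Gw_def)
    hence "(norm (wbar - u))\<^sup>2 = (norm ((wbar - w) + \<eta> *\<^sub>R Gw))\<^sup>2" by metis
    also have "\<dots> = (norm (wbar - w))\<^sup>2 + 2 * \<eta> * (Gw \<bullet> (wbar - w)) + \<eta>\<^sup>2 * (norm Gw)\<^sup>2"
      by (simp only: norm_add_sq norm_scaleR power_mult_distrib inner_scaleR_right inner_commute[of "wbar - w"] power2_abs)
    finally show ?thesis .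
  qed
  have I1: "(wbar - c) \<bullet> (c - u) = - ((u - c) \<bullet> (wbar - c))"
    by (simp add: inner_diff_left inner_diff_right inner_commute)
  have sg: "L wbar z \<ge> L w z + Gw \<bullet> (wbar - w)" using subgrad Gw_def by simp
  have gr: "(norm Gw)\<^sup>2 \<le> A * L w z + B" using growth Gw_def by simp
  have gr2: "\<eta>\<^sup>2 * (norm Gw)\<^sup>2 \<le> \<eta>\<^sup>2 * (A * L w z + B)" using gr by (simp add: mult_left_mono)
  have sg2: "2*\<eta> * L w z \<le> 2*\<eta> * (L wbar z - Gw \<bullet> (wbar - w))" using sg eta by simp
  have F2: "g * \<eta> * (Mb - Mc) * 2 = 2*\<eta>*(g*Mb - g*Mc)" by (simp add: algebra_simps)
  have key0: "2*\<eta>*L w z - \<eta>\<^sup>2*A*L w z + 2*\<eta>*g*Mc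
     \<le> 2*\<eta>*L wbar z + 2*\<eta>*g*Mb + \<eta>\<^sup>2*B + ((norm (wbar - w))\<^sup>2 - (norm (wbar - c))\<^sup>2)"
  proof -
    have a1: "0 \<le> (norm (c - u))\<^sup>2" by simp
    have a2: "2*\<eta>*L w z \<le> 2*\<eta>*L wbar z - 2*\<eta>*(Gw \<bullet> (wbar - w))" using sg2 by (simp add: algebra_simps)
    have a3: "\<eta>\<^sup>2 * (norm Gw)\<^sup>2 \<le> \<eta>\<^sup>2*A*L w z + \<eta>\<^sup>2*B" using gr2 by (simp add: algebra_simps)
    have a4: "2*((u - c) \<bullet> (wbar - c)) \<le> 2*\<eta>*g*Mb - 2*\<eta>*g*Mc" using F1 by (simp add: algebra_simps)
    show ?thesis using a1 a2 a3 a4 N1 N2 I1 by linarith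
  qed
  have key: "2*\<eta> * ((1 - 0.5 * A * \<eta>) * L w z + g * Mc)
     \<le> 2*\<eta> * (L wbar z + g * Mb + \<eta> / 2 * B) + ((norm (wbar - w))\<^sup>2 - (norm (wbar - c))\<^sup>2)"
    using key0 by (simp add: algebra_simps power2_eq_square)
  have "(1 - 0.5 * A * \<eta>) * L w z + g * Mc
     \<le> L wbar z + g * Mb + \<eta> / 2 * B + ((norm (wbar - w))\<^sup>2 - (norm (wbar - c))\<^sup>2) / (2*\<eta>)"
    using key eta by (simp add: field_simps)
  thus ?thesis by (simp add: Let_def u_def c_def Mb_def Mc_def)
qed

end
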